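(* Let $\mathcal E$ be a nest on a complex Banach space $X$ and let $\Psi$ be an essential support function on $\mathcal E$. Then: (i) $\mathcal M^e(\Psi)$ is a $\mathcal T(\mathcal E)$-bimodule containing every $\mathcal T(\mathcal E)$-bimodule $\mathcal J$ with $\Phi^e_{\mathcal J}=\Psi$; (ii) $\mathcal M^0(\Psi)$ is a $\mathcal T(\mathcal E)$-bimodule contained in every norm-closed $\mathcal T(\mathcal E)$-bimodule $\mathcal J$ with $\Phi^e_{\mathcal J}=\Psi$.
   Context: A nest $\mathcal E$ on $X$ is a family of closed linear subspaces of $X$, totally ordered by inclusion, containing $\{0\}$ and $X$, closed under arbitrary meets $\wedge$ (intersections) and joins $\vee$ (norm-closed linear spans of unions). For $E\in\mathcal E$, $E_-=\vee\{F\in\mathcal E: F\subsetneq E\}$ and $E_+=\wedge\{F\in\mathcal E: E\subsetneq F\}$. $\mathcal T(\mathcal E)=\{T\in\mathcal B(X): TE\subseteq E\ \forall E\in\mathcal E\}$; a $\mathcal T(\mathcal E)$-bimodule is a linear subspace $\mathcal J\subseteq\mathcal B(X)$ with $\mathcal T(\mathcal E)\mathcal J,\mathcal J\mathcal T(\mathcal E)\subseteq\mathcal J$. For subspaces $M,L$ ($L$ closed), $M/L=\{m+L:m\in M\}$ and $\dim(M/L)$ is its dimension. $\mathcal E_f=\{N\in\mathcal E: 0<\dim(N/N_-)<\infty\}$. An essential support function is an inclusion-preserving map $\Psi:\mathcal E\to\mathcal E$ such that for all $N,N_1,N_2\in\mathcal E$ with $N_1\subseteq N_2$: (a) $\Psi(N)\in\mathcal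 E_f\Rightarrow\Psi(N)=\Psi(N)_+$; (b) $\dim(N_2/N_1)<\infty\Rightarrow\Psi(N_2)=\Psi(N_1)$. For a bimodule $\mathcal J$, $\Phi^e_{\mathcal J}(N)=\wedge\{L\in\mathcal E: \dim(TN/L)<\infty\ \forall T\in\mathcal J\}$. Define $\mathcal M^e(\Psi)=\{T\in\mathcal B(X): \dim(TN/L)<\infty$ for all $N,L\in\mathcal E$ with $L_+\supsetneq\Psi(N)\}$ and $\mathcal M^0(\Psi)$ = the norm closure of $\sum_{L,N\in\mathcal E,\ L_-\subsetneq\Psi(N)}\operatorname{span}\{f\otimes x: f\in(N_-)^\perp, x\in L\}$, where $S^\perp=\{f\in X^*: f(S)=\{0\}\}$ and $f\otimes x$ is $y\mapsto f(y)x$. *)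

theory Defs
  imports "HOL-Analysis.Analysis"
begin

text \<open>HOL has no class of complex vector spaces; a complex Banach space is a real
Banach space with a complex scalar multiplication extending the real one and
compatible with the norm.\<close>

class complex_banach = banach +
  fixes cscale :: "complex \<Rightarrow> 'a \<Rightarrow> 'a"
  assumes cscale_add_right: "cscale a (x + y) = cscale a x + cscale a y"
    and cscale_add_left: "cscale (a + b) x = cscale a x + cscale b x"
    and cscale_cscale: "cscale a (cscale b x) = cscale (a * b) x"
    and cscale_one: "cscale 1 x = x"
    and scaleR_cscale: "r *\<^sub>R x = cscale (complex_of_real r) x"
    and norm_cscale: "norm (cscale a x) = cmod a * norm x"

definition csubspace :: "'a::complex_banach set \<Rightarrow> bool" where
  "csubspace S \<longleftrightarrow> 0 \<in> S \<and> (\<forall>x\<in>S. \<forall>y\<in>S. x + y \<in> S) \<and> (\<forall>c. \<forall>x\<in>S. cscale c x \<in> S)"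

definition cspan :: "'a::complex_banach set \<Rightarrow> 'a set" where
  "cspan S = \<Inter>{V. csubspace V \<and> S \<subseteq> V}"

definition closed_csubspace :: "'a::complex_banach set \<Rightarrow> bool" where
  "closed_csubspace S \<longleftrightarrow> csubspace S \<and> closed S"

definition join :: "'a::complex_banach set set \<Rightarrow> 'a set" where
  "join F = closure (cspan (\<Union>F))"

text \<open>\<open>fin_quot M L\<close> means \<open>dim(M/L) < \<infinity>\<close>: the image of \<open>M\<close> in \<open>X/L\<close> is
spanned by the classes of finitely many elements of \<open>M\<close>.\<close>
definition fin_quot :: "'a::complex_banach set \<Rightarrow> 'a set \<Rightarrow> bool" where
  "fin_quot M L \<longleftrightarrow> (\<exists>F. finite F \<and> F \<subseteq> M \<and> M \<subseteq> {f + l |f l. f \<in> cspan F \<and> l \<in> L})"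

definition nest :: "'a::complex_banach set set \<Rightarrow> bool" where
  "nest \<E> \<longleftrightarrow> (\<forall>E\<in>\<E>. closed_csubspace E) \<and> (\<forall>A\<in>\<E>. \<forall>B\<in>\<E>. A \<subseteq> B \<or> B \<subseteq> A)
     \<and> {0} \<in> \<E> \<and> UNIV \<in> \<E>
     \<and> (\<forall>F. F \<subseteq> \<E> \<longrightarrow> \<Inter>F \<in> \<E>) \<and> (\<forall>F. F \<subseteq> \<E> \<longrightarrow> join F \<in> \<E>)"

definition lower :: "'a::complex_banach set set \<Rightarrow> 'a set \<Rightarrow> 'a set" where
  "lower \<E> E = join {F\<in>\<E>. F \<subset> E}"

definition upper :: "'a::complex_banach set set \<Rightarrow> 'a set \<Rightarrow> 'a set" where
  "upper \<E> E = \<Inter>{F\<in>\<E>. E \<subset> F}"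

text \<open>\<open>E_f\<close>: \<open>0 < dim(N/N_-) < \<infinity>\<close>; \<open>dim(N/N_-) > 0\<close> means \<open>N \<not>\<subseteq> N_-\<close>.\<close>
definition Ef :: "'a::complex_banach set set \<Rightarrow> 'a set set" where
  "Ef \<E> = {N\<in>\<E>. \<not> N \<subseteq> lower \<E> N \<and> fin_quot N (lower \<E> N)}"

definition ess_support_fn :: "'a::complex_banach set set \<Rightarrow> ('a set \<Rightarrow> 'a set) \<Rightarrow> bool" where
  "ess_support_fn \<E> \<Psi> \<longleftrightarrow>
     (\<forall>N\<in>\<E>. \<Psi> N \<in> \<E>)
   \<and> (\<forall>N1\<in>\<E>. \<forall>N2\<in>\<E>. N1 \<subseteq> N2 \<longrightarrow> \<Psi> N1 \<subseteq> \<Psi> N2)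
   \<and> (\<forall>N\<in>\<E>. \<Psi> N \<in> Ef \<E> \<longrightarrow> \<Psi> N = upper \<E> (\<Psi> N))
   \<and> (\<forall>N1\<in>\<E>. \<forall>N2\<in>\<E>. N1 \<subseteq> N2 \<longrightarrow> fin_quot N2 N1 \<longrightarrow> \<Psi> N2 = \<Psi> N1)"

text \<open>\<open>B(X)\<close>: bounded complex-linear operators, as elements of the Banach space
of bounded (real-)linear operators with the operator norm.\<close>
definition bop :: "('a::complex_banach \<Rightarrow>\<^sub>L 'a) set" where
  "bop = {T. \<forall>c x. blinfun_apply T (cscale c x) = cscale c (blinfun_apply T x)}"

definition dual :: "('a::complex_banach \<Rightarrow>\<^sub>L complex) set" where
  "dual = {f. \<forall>c x. blinfun_apply f (cscale c x) = c * blinfun_apply f x}"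

definition annih :: "'a::complex_banach set \<Rightarrow> ('a \<Rightarrow>\<^sub>L complex) set" where
  "annih S = {f\<in>dual. \<forall>y\<in>S. blinfun_apply f y = 0}"

definition rank_one :: "('a::complex_banach \<Rightarrow>\<^sub>L complex) \<Rightarrow> 'a \<Rightarrow> ('a \<Rightarrow>\<^sub>L 'a)" where
  "rank_one f x = Blinfun (\<lambda>y. cscale (blinfun_apply f y) x)"

definition op_csubspace :: "('a::complex_banach \<Rightarrow>\<^sub>L 'a) set \<Rightarrow> bool" where
  "op_csubspace J \<longleftrightarrow> J \<subseteq> bop \<and> 0 \<in> J \<and> (\<forall>S\<in>J. \<forall>R\<in>J. S + R \<in> J)
     \<and> (\<forall>c. \<forall>S\<in>J. \<forall>R. (\<forall>x. blinfun_apply R x = cscale c (blinfun_apply S x)) \<longrightarrow> R \<in> J)"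

definition op_cspan :: "('a::complex_banach \<Rightarrow>\<^sub>L 'a) set \<Rightarrow> ('a \<Rightarrow>\<^sub>L 'a) set" where
  "op_cspan S = \<Inter>{J. op_csubspace J \<and> S \<subseteq> J}"

definition nest_alg :: "'a::complex_banach set set \<Rightarrow> ('a \<Rightarrow>\<^sub>L 'a) set" where
  "nest_alg \<E> = {T\<in>bop. \<forall>E\<in>\<E>. blinfun_apply T ` E \<subseteq> E}"

definition bimodule :: "'a::complex_banach set set \<Rightarrow> ('a \<Rightarrow>\<^sub>L 'a) set \<Rightarrow> bool" where
  "bimodule \<E> J \<longleftrightarrow> op_csubspace J
     \<and> (\<forall>A\<in>nest_alg \<E>. \<forall>S\<in>J. A o\<^sub>L S \<in> J \<and> S o\<^sub>L A \<in> J)"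

definition Phi_e :: "'a::complex_banach set set \<Rightarrow> ('a \<Rightarrow>\<^sub>L 'a) set \<Rightarrow> 'a set \<Rightarrow> 'a set" where
  "Phi_e \<E> J N = \<Inter>{L\<in>\<E>. \<forall>T\<in>J. fin_quot (blinfun_apply T ` N) L}"

definition Me :: "'a::complex_banach set set \<Rightarrow> ('a set \<Rightarrow> 'a set) \<Rightarrow> ('a \<Rightarrow>\<^sub>L 'a) set" where
  "Me \<E> \<Psi> = {T\<in>bop. \<forall>N\<in>\<E>. \<forall>L\<in>\<E>. \<Psi> N \<subset> upper \<E> L \<longrightarrow> fin_quot (blinfun_apply T ` N) L}"

definition M0 :: "'a::complex_banach set set \<Rightarrow> ('a set \<Rightarrow> 'a set) \<Rightarrow> ('a \<Rightarrow>\<^sub>L 'a) set" where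
  "M0 \<E> \<Psi> = closure (op_cspan (\<Union>{{rank_one f x |f x. f \<in> annih (lower \<E> N) \<and> x \<in> L}
        |L N. L \<in> \<E> \<and> N \<in> \<E> \<and> lower \<E> L \<subset> \<Psi> N}))"

end

theory Submission
  imports Defs
begin


interpretation cv: vector_space "cscale :: complex \<Rightarrow> 'a::complex_banach \<Rightarrow> 'a"
  by unfold_locales (simp_all add: cscale_add_right cscale_add_left cscale_cscale cscale_one)

lemma csubspace_eq: "csubspace = cv.subspace"
  by (auto simp: fun_eq_iff csubspace_def cv.subspace_def)

lemma cspan_eq: "cspan = cv.span"
proof (rule ext)
  fix S :: "'a set"
  show "cspan S = cv.span S"
    unfolding cspan_def csubspace_eq
    using cv.span_minimal cv.span_superset cv.subspace_span by blast
qed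

lemma cscale_zero_left[simp]: "cscale 0 x = 0" using cv.scale_zero_left .
lemma cscale_zero_right[simp]: "cscale c 0 = 0" using cv.scale_zero_right .



definition sumset :: "'a::complex_banach set \<Rightarrow> 'a set \<Rightarrow> 'a set" where
  "sumset A B = {f + l |f l. f \<in> A \<and> l \<in> B}"

lemma sumsetI: "a \<in> A \<Longrightarrow> b \<in> B \<Longrightarrow> a + b \<in> sumset A B"
  unfolding sumset_def by (rule CollectI, rule exI[of _ a], rule exI[of _ b]) simp

lemma subspace_sumset: "cv.subspace A \<Longrightarrow> cv.subspace B \<Longrightarrow> cv.subspace (sumset A B)"
  unfolding sumset_def
proof (rule cv.subspaceI)
  assume a: "cv.subspace A" and b: "cv.subspace B"
  show "0 \<in> {f + l |f l. f \<in> A \<and> l \<in> B}"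
    using a b cv.subspace_0 by force
  fix x y assume "x \<in> {f + l |f l. f \<in> A \<and> l \<in> B}" "y \<in> {f + l |f l. f \<in> A \<and> l \<in> B}"
  then obtain f1 l1 f2 l2 where "x = f1 + l1" "y = f2 + l2" "f1 \<in> A" "f2 \<in> A" "l1 \<in> B" "l2 \<in> B" by blast
  then show "x + y \<in> {f + l |f l. f \<in> A \<and> l \<in> B}"
  proof -
    have "x + y = (f1+f2)+(l1+l2)" using \<open>x = f1 + l1\<close> \<open>y = f2 + l2\<close> by (simp add: algebra_simps)
    moreover have "f1+f2 \<in> A" "l1+l2 \<in> B" using a b cv.subspace_add \<open>f1 \<in> A\<close> \<open>f2 \<in> A\<close> \<open>l1 \<in> B\<close> \<open>l2 \<in> B\<close> by auto
    ultimately show ?thesis by blast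
  qed
next
  fix c x assume a: "cv.subspace A" and b: "cv.subspace B" and "x \<in> {f + l |f l. f \<in> A \<and> l \<in> B}"
  then obtain f1 l1 where "x = f1 + l1" "f1 \<in> A" "l1 \<in> B" by blast
  then show "cscale c x \<in> {f + l |f l. f \<in> A \<and> l \<in> B}"
  proof -
    have "cscale c x = cscale c f1 + cscale c l1" using \<open>x = f1 + l1\<close> by (simp add: cscale_add_right)
    moreover have "cscale c f1 \<in> A" "cscale c l1 \<in> B" using a b cv.subspace_scale \<open>f1 \<in> A\<close> \<open>l1 \<in> B\<close> by auto
    ultimately show ?thesis by blast
  qed
qed

lemma fin_quot_alt: "fin_quot M L \<longleftrightarrow> (\<exists>F. finite F \<and> F \<subseteq> M \<and> M \<subseteq> sumset (cv.span F) L)"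
  unfolding fin_quot_def sumset_def cspan_eq ..

lemma sumset_mono: "B \<subseteq> B' \<Longrightarrow> sumset A B \<subseteq> sumset A B'"
proof
  fix u assume "B \<subseteq> B'" "u \<in> sumset A B"
  then obtain f l where "u = f + l" "f \<in> A" "l \<in> B'" unfolding sumset_def by blast
  then show "u \<in> sumset A B'" by (simp add: sumsetI)
qed

lemma fin_quot_mono: "fin_quot M L \<Longrightarrow> L \<subseteq> L' \<Longrightarrow> fin_quot M L'"
  unfolding fin_quot_alt using sumset_mono by (meson order_trans)

lemma fin_quot_sub:
  assumes "M \<subseteq> L" shows "fin_quot M L"
  unfolding fin_quot_alt
proof (intro exI[of _ "{}"] conjI)
  show "M \<subseteq> sumset (cv.span {}) L"
  proof
    fix m assume "m \<in> M"
    then have mL: "m \<in> L" using assms by blast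
    show "m \<in> sumset (cv.span {}) L" unfolding sumset_def
      by (rule CollectI, rule exI[of _ 0], rule exI[of _ m]) (simp add: cv.span_zero mL)
  qed
qed auto

lemma fin_quot_intro:
  assumes "finite F"
  shows "cv.subspace M \<Longrightarrow> cv.subspace L \<Longrightarrow> M \<subseteq> sumset (cv.span F) L \<Longrightarrow> fin_quot M L"
  using assms
proof (induction F arbitrary: M rule: finite_induct)
  case empty
  then show ?case unfolding fin_quot_alt by (intro exI[of _ "{}"]) auto
next
  case (insert f F)
  show ?case
  proof (cases "M \<subseteq> sumset (cv.span F) L")
    case True
    then show ?thesis using insert by blast
  next
    case False
    then obtain m0 where m0: "m0 \<in> M" "m0 \<notin> sumset (cv.span F) L" by blast
    with insert obtain s0 l0 where s0: "m0 = s0 + l0" "s0 \<in> cv.span (insert f F)" "l0 \<in> L"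
      unfolding sumset_def by blast
    then obtain k where k: "s0 - cscale k f \<in> cv.span F" using cv.span_breakdown_eq by blast
    have k0: "k \<noteq> 0"
    proof
      assume "k = 0"
      then have "s0 \<in> cv.span F" using k by simp
      then have "m0 \<in> sumset (cv.span F) L" unfolding s0(1) using s0(3) by (rule sumsetI)
      then show False using m0 by blast
    qed
    define M' where "M' = M \<inter> sumset (cv.span F) L"
    have sM': "cv.subspace M'" unfolding M'_def
      by (intro cv.subspace_inter insert.prems subspace_sumset) auto
    then obtain G' where G': "finite G'" "G' \<subseteq> M'" "M' \<subseteq> sumset (cv.span G') L"
      using insert.IH[OF sM' insert.prems(2)] unfolding fin_quot_alt M'_def by blast
    show ?thesis unfolding fin_quot_alt
    proof (intro exI[of _ "insert m0 G'"] conjI)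
      show "finite (insert m0 G')" using G' by simp
      show "insert m0 G' \<subseteq> M" using G' m0 unfolding M'_def by auto
      show "M \<subseteq> sumset (cv.span (insert m0 G')) L"
      proof
        fix m assume m: "m \<in> M"
        then obtain s l where sl: "m = s + l" "s \<in> cv.span (insert f F)" "l \<in> L"
          using insert.prems(3) unfolding sumset_def by blast
        then obtain d where d: "s - cscale d f \<in> cv.span F" using cv.span_breakdown_eq by blast
        define e where "e = d / k"
        have e1: "cscale e (s0 - cscale k f) = cscale e s0 - cscale d f"
          using k0 unfolding e_def by (simp add: cv.scale_right_diff_distrib)
        have e2: "cscale e m0 = cscale e s0 + cscale e l0"
          unfolding s0(1) by (rule cscale_add_right)
        have eq: "m - cscale e m0 = ((s - cscale d f) - cscale e (s0 - cscale k f)) + (l - cscale e l0)"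
          unfolding e1 e2 sl(1) by (simp add: algebra_simps)
        have i1: "m - cscale e m0 \<in> M"
          using cv.subspace_diff[OF insert.prems(1) m cv.subspace_scale[OF insert.prems(1) m0(1)]] .
        have i2: "(s - cscale d f) - cscale e (s0 - cscale k f) \<in> cv.span F"
          using cv.span_diff[OF d cv.span_scale[OF k]] .
        have i3: "l - cscale e l0 \<in> L"
          using cv.subspace_diff[OF insert.prems(2) sl(3) cv.subspace_scale[OF insert.prems(2) s0(3)]] .
        have "((s - cscale d f) - cscale e (s0 - cscale k f)) + (l - cscale e l0) \<in> sumset (cv.span F) L"
          by (rule sumsetI[OF i2 i3])
        then have "m - cscale e m0 \<in> M'"
          unfolding M'_def using i1 eq by simp
        then obtain s1 l1 where "m - cscale e m0 = s1 + l1" "s1 \<in> cv.span G'" "l1 \<in> L"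
          using G' unfolding sumset_def by blast
        then have mm: "m = (cscale e m0 + s1) + l1" by (simp add: algebra_simps)
        have "(cscale e m0 + s1) - cscale e m0 \<in> cv.span G'" using \<open>s1 \<in> cv.span G'\<close> by simp
        then have "cscale e m0 + s1 \<in> cv.span (insert m0 G')"
          using cv.span_breakdown_eq[of "cscale e m0 + s1" m0 G'] by blast
        then show "m \<in> sumset (cv.span (insert m0 G')) L"
          unfolding mm using \<open>l1 \<in> L\<close> by (rule sumsetI)
      qed
    qed
  qed
qed



lemma bop_lin:
  assumes "T \<in> bop"
  shows "blinfun_apply T (cscale c x) = cscale c (blinfun_apply T x)"
  using assms unfolding bop_def by blast

lemma bop_zero[simp]: "0 \<in> bop" unfolding bop_def by simp

lemma bop_add: "S \<in> bop \<Longrightarrow> R \<in> bop \<Longrightarrow> S + R \<in> bop"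
  unfolding bop_def by (simp add: plus_blinfun.rep_eq blinfun.add_left cscale_add_right)

lemma bop_compose: "S \<in> bop \<Longrightarrow> R \<in> bop \<Longrightarrow> S o\<^sub>L R \<in> bop"
  unfolding bop_def by simp

lemma bounded_linear_cscale: "bounded_linear (cscale c :: 'a::complex_banach \<Rightarrow> 'a)"
proof (rule bounded_linear_intro[where K="cmod c"])
  fix x y :: 'a show "cscale c (x + y) = cscale c x + cscale c y" by (rule cscale_add_right)
next
  fix r and x :: 'a
  show "cscale c (r *\<^sub>R x) = r *\<^sub>R cscale c x"
    by (simp add: scaleR_cscale cscale_cscale mult.commute)
next
  fix x :: 'a show "norm (cscale c x) \<le> norm x * cmod c" by (simp add: norm_cscale)
qed

lemma closed_bop: "closed (bop :: ('a::complex_banach \<Rightarrow>\<^sub>L 'a) set)"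
proof -
  have "bop = (\<Inter>c. \<Inter>x::'a. {T. blinfun_apply T (cscale c x) = cscale c (blinfun_apply T x)})"
    unfolding bop_def by blast
  moreover have "closed {T::'a \<Rightarrow>\<^sub>L 'a. blinfun_apply T (cscale c x) = cscale c (blinfun_apply T x)}" for c x
  proof -
    have c1: "continuous_on UNIV (\<lambda>T::'a\<Rightarrow>\<^sub>L'a. blinfun_apply T (cscale c x))"
      by (rule linear_continuous_on[OF bounded_linear_apply_blinfun])
    have c2: "continuous_on UNIV (\<lambda>T::'a\<Rightarrow>\<^sub>L'a. cscale c (blinfun_apply T x))"
      by (rule linear_continuous_on[OF bounded_linear_compose[OF bounded_linear_cscale bounded_linear_apply_blinfun]])
    show ?thesis using closed_Collect_eq[OF c1 c2] by simp
  qed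
  ultimately show ?thesis by (metis (no_types, lifting) closed_INT)
qed

lemma nest_sub:
  assumes "nest \<E>" "E \<in> \<E>" shows "cv.subspace E" "closed E"
  using assms unfolding nest_def closed_csubspace_def csubspace_eq by auto

lemma nest_total: "nest \<E> \<Longrightarrow> A \<in> \<E> \<Longrightarrow> B \<in> \<E> \<Longrightarrow> A \<subseteq> B \<or> B \<subseteq> A"
  unfolding nest_def by blast

lemma subspace_image:
  assumes "T \<in> bop" "cv.subspace N"
  shows "cv.subspace (blinfun_apply T ` N)"
proof (rule cv.subspaceI)
  show "0 \<in> blinfun_apply T ` N" using assms cv.subspace_0 by (metis blinfun.zero_right image_eqI)
next
  fix x y assume "x \<in> blinfun_apply T ` N" "y \<in> blinfun_apply T ` N"
  then obtain a b where "a \<in> N" "b \<in> N" "x = T a" "y = T b" by blast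
  then show "x + y \<in> blinfun_apply T ` N"
    using assms cv.subspace_add by (metis blinfun.add_right image_eqI)
next
  fix c x assume "x \<in> blinfun_apply T ` N"
  then obtain a where "a \<in> N" "x = T a" by blast
  then show "cscale c x \<in> blinfun_apply T ` N"
    using assms cv.subspace_scale bop_lin by (metis image_eqI)
qed

lemma image_span:
  assumes "T \<in> bop" shows "blinfun_apply T ` cv.span F \<subseteq> cv.span (blinfun_apply T ` F)"
proof -
  have "cv.subspace {x. T x \<in> cv.span (blinfun_apply T ` F)}"
  proof (rule cv.subspaceI)
    show "0 \<in> {x. T x \<in> cv.span (blinfun_apply T ` F)}" by (simp add: cv.span_zero)
  next
    fix x y assume "x \<in> {x. T x \<in> cv.span (blinfun_apply T ` F)}" "y \<in> {x. T x \<in> cv.span (blinfun_apply T ` F)}"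
    then show "x + y \<in> {x. T x \<in> cv.span (blinfun_apply T ` F)}" by (simp add: blinfun.add_right cv.span_add)
  next
    fix c x assume "x \<in> {x. T x \<in> cv.span (blinfun_apply T ` F)}"
    then show "cscale c x \<in> {x. T x \<in> cv.span (blinfun_apply T ` F)}" by (simp add: bop_lin[OF assms] cv.span_scale)
  qed
  moreover have "F \<subseteq> {x. T x \<in> cv.span (blinfun_apply T ` F)}"
  proof
    fix x assume "x \<in> F"
    then have "T x \<in> blinfun_apply T ` F" by blast
    then show "x \<in> {x. T x \<in> cv.span (blinfun_apply T ` F)}" by (simp add: cv.span_base)
  qed
  ultimately have "cv.span F \<subseteq> {x. T x \<in> cv.span (blinfun_apply T ` F)}" by (rule cv.span_minimal[rotated])
  then show ?thesis by blast
qed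

lemma fin_quot_image:
  assumes "fin_quot M L" "A \<in> bop" "cv.subspace M" "cv.subspace L" "blinfun_apply A ` L \<subseteq> L"
  shows "fin_quot (blinfun_apply A ` M) L"
proof -
  obtain F where F: "finite F" "M \<subseteq> sumset (cv.span F) L" using assms(1) unfolding fin_quot_alt by blast
  have "blinfun_apply A ` M \<subseteq> sumset (cv.span (blinfun_apply A ` F)) L"
  proof
    fix y assume "y \<in> blinfun_apply A ` M"
    then obtain x where x: "x \<in> M" "y = A x" by blast
    have "x \<in> sumset (cv.span F) L" using F(2) x(1) by blast
    then obtain s l where sl: "x = s + l" "s \<in> cv.span F" "l \<in> L" unfolding sumset_def by blast
    have e: "y = A s + A l" using x(2) sl(1) by (simp add: blinfun.add_right)
    have a: "A s \<in> cv.span (blinfun_apply A ` F)" using image_span[OF assms(2)] sl(2) by blast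
    have b: "A l \<in> L" using assms(5) sl(3) by blast
    show "y \<in> sumset (cv.span (blinfun_apply A ` F)) L" unfolding e by (rule sumsetI[OF a b])
  qed
  then show ?thesis
    by (rule fin_quot_intro[OF finite_imageI[OF F(1)] subspace_image[OF assms(2) assms(3)] assms(4)])
qed

lemma fin_quot_subset:
  assumes "fin_quot M L" "M' \<subseteq> M" "cv.subspace M'" "cv.subspace L"
  shows "fin_quot M' L"
proof -
  obtain F where F: "finite F" "M \<subseteq> sumset (cv.span F) L" using assms(1) unfolding fin_quot_alt by blast
  have "M' \<subseteq> sumset (cv.span F) L" using F(2) assms(2) by blast
  then show ?thesis by (rule fin_quot_intro[OF F(1) assms(3) assms(4)])
qed

lemma nest_alg_bop: "A \<in> nest_alg \<E> \<Longrightarrow> A \<in> bop" unfolding nest_alg_def by blast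
lemma nest_alg_inv: "A \<in> nest_alg \<E> \<Longrightarrow> E \<in> \<E> \<Longrightarrow> blinfun_apply A ` E \<subseteq> E"
  unfolding nest_alg_def by blast

lemma Me_bimodule:
  assumes nest: "nest \<E>"
  shows "bimodule \<E> (Me \<E> \<Psi>)"
  unfolding bimodule_def op_csubspace_def
proof (intro conjI ballI allI impI)
  show "Me \<E> \<Psi> \<subseteq> bop" unfolding Me_def by blast
  show "0 \<in> Me \<E> \<Psi>" unfolding Me_def
  proof (intro CollectI conjI ballI impI)
    fix N L assume NL: "N \<in> \<E>" "L \<in> \<E>"
    have "0 \<in> L" using cv.subspace_0[OF nest_sub(1)[OF nest NL(2)]] .
    then have "blinfun_apply 0 ` N \<subseteq> L" by auto
    then show "fin_quot (blinfun_apply 0 ` N) L" by (rule fin_quot_sub)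
  qed simp
next
  fix S R assume S: "S \<in> Me \<E> \<Psi>" and R: "R \<in> Me \<E> \<Psi>"
  show "S + R \<in> Me \<E> \<Psi>" unfolding Me_def
  proof (intro CollectI conjI ballI impI)
    show "S + R \<in> bop" using S R bop_add unfolding Me_def by blast
    fix N L assume NL: "N \<in> \<E>" "L \<in> \<E>" "\<Psi> N \<subset> upper \<E> L"
    obtain F1 where F1: "finite F1" "blinfun_apply S ` N \<subseteq> sumset (cv.span F1) L"
      using S NL unfolding Me_def fin_quot_alt by blast
    obtain F2 where F2: "finite F2" "blinfun_apply R ` N \<subseteq> sumset (cv.span F2) L"
      using R NL unfolding Me_def fin_quot_alt by blast
    have sL: "cv.subspace L" "cv.subspace N" using nest_sub[OF nest] NL by auto
    have "blinfun_apply (S + R) ` N \<subseteq> sumset (cv.span (F1 \<union> F2)) L"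
    proof
      fix y assume "y \<in> blinfun_apply (S + R) ` N"
      then obtain x where x: "x \<in> N" "y = S x + R x" by (auto simp: plus_blinfun.rep_eq)
      have "S x \<in> sumset (cv.span F1) L" using F1(2) x(1) by blast
      then obtain a1 b1 where ab1: "S x = a1 + b1" "a1 \<in> cv.span F1" "b1 \<in> L" unfolding sumset_def by blast
      have "R x \<in> sumset (cv.span F2) L" using F2(2) x(1) by blast
      then obtain a2 b2 where ab2: "R x = a2 + b2" "a2 \<in> cv.span F2" "b2 \<in> L" unfolding sumset_def by blast
      have e: "y = (a1 + a2) + (b1 + b2)" using x(2) ab1(1) ab2(1) by (simp add: algebra_simps)
      have "a1 \<in> cv.span (F1 \<union> F2)" using cv.span_mono[of F1 "F1 \<union> F2"] ab1(2) by blast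
      moreover have "a2 \<in> cv.span (F1 \<union> F2)" using cv.span_mono[of F2 "F1 \<union> F2"] ab2(2) by blast
      ultimately have a: "a1 + a2 \<in> cv.span (F1 \<union> F2)" by (rule cv.span_add)
      have b: "b1 + b2 \<in> L" by (rule cv.subspace_add[OF sL(1) ab1(3) ab2(3)])
      show "y \<in> sumset (cv.span (F1 \<union> F2)) L" unfolding e by (rule sumsetI[OF a b])
    qed
    moreover have "finite (F1 \<union> F2)" using F1(1) F2(1) by simp
    ultimately show "fin_quot (blinfun_apply (S + R) ` N) L"
      using fin_quot_intro[OF _ subspace_image[OF \<open>S + R \<in> bop\<close> sL(2)] sL(1)] by blast
  qed
next
  fix c S R assume S: "S \<in> Me \<E> \<Psi>" and R: "\<forall>x. blinfun_apply R x = cscale c (blinfun_apply S x)"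
  show "R \<in> Me \<E> \<Psi>" unfolding Me_def
  proof (intro CollectI conjI ballI impI)
    have Sb: "S \<in> bop" using S unfolding Me_def by blast
    show Rb: "R \<in> bop" unfolding bop_def using R by (simp add: bop_lin[OF Sb] cscale_cscale mult.commute)
    fix N L assume NL: "N \<in> \<E>" "L \<in> \<E>" "\<Psi> N \<subset> upper \<E> L"
    obtain F1 where F1: "finite F1" "blinfun_apply S ` N \<subseteq> sumset (cv.span F1) L"
      using S NL unfolding Me_def fin_quot_alt by blast
    have sL: "cv.subspace L" "cv.subspace N" using nest_sub[OF nest] NL by auto
    have "blinfun_apply R ` N \<subseteq> sumset (cv.span F1) L"
    proof
      fix y assume "y \<in> blinfun_apply R ` N"
      then obtain x where x: "x \<in> N" "y = cscale c (S x)" using R by auto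
      have "S x \<in> sumset (cv.span F1) L" using F1(2) x(1) by blast
      then obtain a1 b1 where ab: "S x = a1 + b1" "a1 \<in> cv.span F1" "b1 \<in> L" unfolding sumset_def by blast
      have e: "y = cscale c a1 + cscale c b1" using x(2) ab(1) by (simp add: cscale_add_right)
      have a: "cscale c a1 \<in> cv.span F1" by (rule cv.span_scale[OF ab(2)])
      have b: "cscale c b1 \<in> L" by (rule cv.subspace_scale[OF sL(1) ab(3)])
      show "y \<in> sumset (cv.span F1) L" unfolding e by (rule sumsetI[OF a b])
    qed
    then show "fin_quot (blinfun_apply R ` N) L"
      by (rule fin_quot_intro[OF F1(1) subspace_image[OF Rb sL(2)] sL(1)])
  qed
next
  fix A S assume A: "A \<in> nest_alg \<E>" and S: "S \<in> Me \<E> \<Psi>"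
  have Ab: "A \<in> bop" using A nest_alg_bop by blast
  have Sb: "S \<in> bop" using S unfolding Me_def by blast
  show "A o\<^sub>L S \<in> Me \<E> \<Psi>" unfolding Me_def
  proof (intro CollectI conjI ballI impI)
    show "A o\<^sub>L S \<in> bop" using Ab Sb bop_compose by blast
    fix N L assume NL: "N \<in> \<E>" "L \<in> \<E>" "\<Psi> N \<subset> upper \<E> L"
    have sL: "cv.subspace L" "cv.subspace N" using nest_sub[OF nest] NL by auto
    have f1: "fin_quot (blinfun_apply S ` N) L" using S NL unfolding Me_def by blast
    have "fin_quot (blinfun_apply A ` (blinfun_apply S ` N)) L"
      by (rule fin_quot_image[OF f1 Ab subspace_image[OF Sb sL(2)] sL(1) nest_alg_inv[OF A NL(2)]])
    then show "fin_quot (blinfun_apply (A o\<^sub>L S) ` N) L" by (simp add: image_image)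
  qed
  show "S o\<^sub>L A \<in> Me \<E> \<Psi>" unfolding Me_def
  proof (intro CollectI conjI ballI impI)
    show "S o\<^sub>L A \<in> bop" using Ab Sb bop_compose by blast
    fix N L assume NL: "N \<in> \<E>" "L \<in> \<E>" "\<Psi> N \<subset> upper \<E> L"
    have sL: "cv.subspace L" "cv.subspace N" using nest_sub[OF nest] NL by auto
    have sub: "blinfun_apply S ` (blinfun_apply A ` N) \<subseteq> blinfun_apply S ` N"
      using nest_alg_inv[OF A NL(1)] by blast
    have "cv.subspace (blinfun_apply S ` (blinfun_apply A ` N))"
      using subspace_image[OF Sb subspace_image[OF Ab sL(2)]] .
    moreover have f1: "fin_quot (blinfun_apply S ` N) L" using S NL unfolding Me_def by blast
    ultimately have "fin_quot (blinfun_apply S ` (blinfun_apply A ` N)) L"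
      using fin_quot_subset[OF f1 sub _ sL(1)] by blast
    then show "fin_quot (blinfun_apply (S o\<^sub>L A) ` N) L" by (simp add: image_image)
  qed
qed

lemma Me_max:
  assumes nest: "nest \<E>" and J: "bimodule \<E> J" and Phi: "\<forall>N\<in>\<E>. Phi_e \<E> J N = \<Psi> N"
  shows "J \<subseteq> Me \<E> \<Psi>"
proof
  fix T assume T: "T \<in> J"
  show "T \<in> Me \<E> \<Psi>" unfolding Me_def
  proof (intro CollectI conjI ballI impI)
    show "T \<in> bop" using J T unfolding bimodule_def op_csubspace_def by blast
    fix N L assume NL: "N \<in> \<E>" "L \<in> \<E>" "\<Psi> N \<subset> upper \<E> L"
    show "fin_quot (blinfun_apply T ` N) L"
    proof (rule ccontr)
      assume nf: "\<not> fin_quot (blinfun_apply T ` N) L"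
      have "upper \<E> L \<subseteq> Phi_e \<E> J N"
        unfolding Phi_e_def
      proof (rule Inter_greatest)
        fix L' assume L': "L' \<in> {L' \<in> \<E>. \<forall>T\<in>J. fin_quot (blinfun_apply T ` N) L'}"
        have L'E: "L' \<in> \<E>" and L'f: "fin_quot (blinfun_apply T ` N) L'" using L' T by auto
        have "\<not> L' \<subseteq> L"
        proof
          assume "L' \<subseteq> L"
          then have "fin_quot (blinfun_apply T ` N) L" using fin_quot_mono[OF L'f] by simp
          then show False using nf by simp
        qed
        then have "L \<subset> L'" using nest_total[OF nest NL(2) L'E] by auto
        then show "upper \<E> L \<subseteq> L'" unfolding upper_def using L'E by (intro Inter_lower) simp
      qed
      moreover have "Phi_e \<E> J N = \<Psi> N" using Phi NL(1) by simp
      ultimately have "upper \<E> L \<subseteq> \<Psi> N" by simp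
      then show False using NL(3) by (simp add: less_le_not_le)
    qed
  qed
qed



lemma bounded_linear_rank_one:
  fixes f :: "'a::complex_banach \<Rightarrow>\<^sub>L complex"
  shows "bounded_linear (\<lambda>y. cscale (blinfun_apply f y) x)"
proof (rule bounded_linear_intro[where K="norm f * norm x"])
  fix y z show "cscale (blinfun_apply f (y + z)) x = cscale (blinfun_apply f y) x + cscale (blinfun_apply f z) x"
    by (simp add: blinfun.add_right cscale_add_left)
next
  fix r y show "cscale (blinfun_apply f (r *\<^sub>R y)) x = r *\<^sub>R cscale (blinfun_apply f y) x"
  proof -
    have "blinfun_apply f (r *\<^sub>R y) = complex_of_real r * blinfun_apply f y"
      by (simp add: blinfun.scaleR_right scaleR_conv_of_real)
    then show ?thesis unfolding scaleR_cscale[of r "cscale (blinfun_apply f y) x"] cscale_cscale by simp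
  qed
next
  fix y
  have "norm (cscale (blinfun_apply f y) x) = cmod (blinfun_apply f y) * norm x" by (rule norm_cscale)
  also have "\<dots> \<le> (norm f * norm y) * norm x" by (intro mult_right_mono norm_blinfun) simp
  finally show "norm (cscale (blinfun_apply f y) x) \<le> norm y * (norm f * norm x)" by (simp add: algebra_simps)
qed

lemma rank_one_apply[simp]: "blinfun_apply (rank_one f x) y = cscale (blinfun_apply f y) x"
  unfolding rank_one_def bounded_linear_Blinfun_apply[OF bounded_linear_rank_one] ..

lemma dual_lin: "f \<in> dual \<Longrightarrow> blinfun_apply f (cscale c x) = c * blinfun_apply f x"
  unfolding dual_def by blast

lemma rank_one_bop: "f \<in> dual \<Longrightarrow> rank_one f x \<in> bop"
  unfolding bop_def by (simp add: dual_lin cscale_cscale)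

lemma compose_rank_one_left: "A \<in> bop \<Longrightarrow> A o\<^sub>L rank_one f x = rank_one f (blinfun_apply A x)"
  by (rule blinfun_eqI) (simp add: bop_lin)

lemma compose_rank_one_right: "rank_one f x o\<^sub>L A = rank_one (f o\<^sub>L A) x"
  by (rule blinfun_eqI) simp

lemma dual_compose: "f \<in> dual \<Longrightarrow> A \<in> bop \<Longrightarrow> f o\<^sub>L A \<in> dual"
  unfolding dual_def by (simp add: bop_lin)

lemma lower_in: "nest \<E> \<Longrightarrow> lower \<E> N \<in> \<E>"
  unfolding lower_def nest_def by auto

lemma below_lower: "E \<subset> N \<Longrightarrow> E \<in> \<E> \<Longrightarrow> E \<subseteq> lower \<E> N"
proof -
  assume "E \<subset> N" "E \<in> \<E>"
  then have "E \<subseteq> \<Union>{F\<in>\<E>. F \<subset> N}" by blast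
  also have "\<dots> \<subseteq> cspan (\<Union>{F\<in>\<E>. F \<subset> N})" unfolding cspan_eq by (rule cv.span_superset)
  also have "\<dots> \<subseteq> lower \<E> N" unfolding lower_def join_def by (rule closure_subset)
  finally show ?thesis .
qed

lemma rank_one_nest_alg:
  assumes nest: "nest \<E>" and K: "K \<in> \<E>" and h: "h \<in> annih (lower \<E> K)" and v: "v \<in> K"
  shows "rank_one h v \<in> nest_alg \<E>"
  unfolding nest_alg_def
proof (intro CollectI conjI ballI)
  show "rank_one h v \<in> bop" using h rank_one_bop unfolding annih_def by blast
  fix E assume E: "E \<in> \<E>"
  show "blinfun_apply (rank_one h v) ` E \<subseteq> E"
  proof (cases "K \<subseteq> E")
    case True
    then have vE: "v \<in> E" using v by blast
    show ?thesis
    proof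
      fix u assume "u \<in> blinfun_apply (rank_one h v) ` E"
      then obtain w where w: "u = cscale (blinfun_apply h w) v" by auto
      show "u \<in> E" unfolding w by (rule cv.subspace_scale[OF nest_sub(1)[OF nest E] vE])
    qed
  next
    case False
    then have "E \<subset> K" using nest_total[OF nest E K] by blast
    then have "E \<subseteq> lower \<E> K" using below_lower E by blast
    show ?thesis
    proof
      fix u assume "u \<in> blinfun_apply (rank_one h v) ` E"
      then obtain w where w: "w \<in> E" "u = cscale (blinfun_apply h w) v" by auto
      then have "blinfun_apply h w = 0" using h \<open>E \<subseteq> lower \<E> K\<close> unfolding annih_def by blast
      then show "u \<in> E" using w nest_sub[OF nest E] cv.subspace_0 by simp
    qed
  qed
qed

lemma op_csubspace_bop: "op_csubspace bop"
  unfolding op_csubspace_def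
proof (intro conjI ballI allI impI)
  fix S R :: "'a \<Rightarrow>\<^sub>L 'a" assume "S \<in> bop" "R \<in> bop"
  then show "S + R \<in> bop" by (rule bop_add)
next
  fix c and S R :: "'a \<Rightarrow>\<^sub>L 'a" assume S: "S \<in> bop" and R: "\<forall>x. blinfun_apply R x = cscale c (blinfun_apply S x)"
  show "R \<in> bop" unfolding bop_def using R by (simp add: bop_lin[OF S] cscale_cscale mult.commute)
qed simp_all

lemma op_cspan_sub: "op_csubspace J \<Longrightarrow> S \<subseteq> J \<Longrightarrow> op_cspan S \<subseteq> J"
  unfolding op_cspan_def by (rule Inter_lower) simp

lemma op_cspan_mem: "x \<in> op_cspan G \<longleftrightarrow> (\<forall>J. op_csubspace J \<and> G \<subseteq> J \<longrightarrow> x \<in> J)"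
  unfolding op_cspan_def by auto

lemma op_cspan_props:
  assumes "G \<subseteq> bop"
  shows "op_csubspace (op_cspan G)" "G \<subseteq> op_cspan G"
proof -
  show "G \<subseteq> op_cspan G" unfolding subset_eq op_cspan_mem by blast
  have "op_cspan G \<subseteq> bop" by (rule op_cspan_sub[OF op_csubspace_bop assms])
  moreover have "0 \<in> op_cspan G" unfolding op_cspan_mem op_csubspace_def by blast
  moreover have "S + R \<in> op_cspan G" if "S \<in> op_cspan G" "R \<in> op_cspan G" for S R
    using that unfolding op_cspan_mem op_csubspace_def by blast
  moreover have "R \<in> op_cspan G" if "S \<in> op_cspan G" "\<forall>x. blinfun_apply R x = cscale c (blinfun_apply S x)" for c S R
    using that unfolding op_cspan_mem op_csubspace_def by blast
  ultimately show "op_csubspace (op_cspan G)" unfolding op_csubspace_def[of "op_cspan G"] by blast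
qed

lemma op_csubspace_scale:
  "op_csubspace J \<Longrightarrow> S \<in> J \<Longrightarrow> (\<And>x. blinfun_apply R x = cscale c (blinfun_apply S x)) \<Longrightarrow> R \<in> J"
  unfolding op_csubspace_def by blast

lemma bimodule_op_cspan:
  assumes G: "G \<subseteq> bop"
    and cl: "\<And>A S. A \<in> nest_alg \<E> \<Longrightarrow> S \<in> G \<Longrightarrow> A o\<^sub>L S \<in> op_cspan G \<and> S o\<^sub>L A \<in> op_cspan G"
  shows "bimodule \<E> (op_cspan G)"
proof -
  have sp: "op_csubspace (op_cspan G)" and Gs: "G \<subseteq> op_cspan G" using op_cspan_props[OF G] by auto
  have "A o\<^sub>L S \<in> op_cspan G \<and> S o\<^sub>L A \<in> op_cspan G" if A: "A \<in> nest_alg \<E>" and S: "S \<in> op_cspan G" for A S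
  proof -
  have Ab: "A \<in> bop" using A nest_alg_bop by blast
  define J' where "J' = {S \<in> op_cspan G. A o\<^sub>L S \<in> op_cspan G \<and> S o\<^sub>L A \<in> op_cspan G}"
  have "op_csubspace J'" unfolding op_csubspace_def
  proof (intro conjI ballI allI impI)
    show "J' \<subseteq> bop" using sp unfolding J'_def op_csubspace_def by blast
    show "0 \<in> J'" using sp unfolding J'_def op_csubspace_def by simp
  next
    fix S R assume "S \<in> J'" "R \<in> J'"
    moreover have "A o\<^sub>L (S + R) = (A o\<^sub>L S) + (A o\<^sub>L R)"
      by (rule bounded_bilinear.add_right[OF bounded_bilinear_blinfun_compose])
    moreover have "(S + R) o\<^sub>L A = (S o\<^sub>L A) + (R o\<^sub>L A)"
      by (rule bounded_bilinear.add_left[OF bounded_bilinear_blinfun_compose])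
    ultimately show "S + R \<in> J'" using sp unfolding J'_def op_csubspace_def by auto
  next
    fix c S R assume S: "S \<in> J'" and R: "\<forall>x. blinfun_apply R x = cscale c (blinfun_apply S x)"
    have S1: "S \<in> op_cspan G" "A o\<^sub>L S \<in> op_cspan G" "S o\<^sub>L A \<in> op_cspan G" using S unfolding J'_def by auto
    have "R \<in> op_cspan G" by (rule op_csubspace_scale[OF sp S1(1), of _ c]) (simp add: R)
    moreover have "A o\<^sub>L R \<in> op_cspan G"
      by (rule op_csubspace_scale[OF sp S1(2), of _ c]) (simp add: R bop_lin[OF Ab])
    moreover have "R o\<^sub>L A \<in> op_cspan G"
      by (rule op_csubspace_scale[OF sp S1(3), of _ c]) (simp add: R)
    ultimately show "R \<in> J'" unfolding J'_def by blast
  qed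
  moreover have "G \<subseteq> J'" using cl[OF A] Gs unfolding J'_def by blast
  ultimately have "op_cspan G \<subseteq> J'" by (rule op_cspan_sub)
  then show "A o\<^sub>L S \<in> op_cspan G \<and> S o\<^sub>L A \<in> op_cspan G" using S unfolding J'_def by blast
  qed
  then show ?thesis unfolding bimodule_def using sp by blast
qed

lemma closure_stable:
  assumes "continuous_on UNIV f" "\<And>S. S \<in> J \<Longrightarrow> f S \<in> closure J" "S \<in> closure J"
  shows "f S \<in> closure J"
proof -
  have c: "continuous_on (closure J) f" using assms(1) continuous_on_subset by blast
  have i: "f ` J \<subseteq> closure J" using assms(2) by blast
  have "f ` closure J \<subseteq> closure J" by (rule image_closure_subset[OF c closed_closure i])
  then show ?thesis using assms(3) by blast
qed

definition cmul :: "complex \<Rightarrow> ('a::complex_banach \<Rightarrow>\<^sub>L 'a)" where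
  "cmul c = Blinfun (cscale c)"

lemma cmul_apply[simp]: "blinfun_apply (cmul c) x = cscale c x"
  unfolding cmul_def bounded_linear_Blinfun_apply[OF bounded_linear_cscale] ..

lemma bimodule_closure:
  assumes J: "bimodule \<E> J"
  shows "bimodule \<E> (closure J)"
proof -
  have sp: "op_csubspace J" using J unfolding bimodule_def by blast
  have sub: "J \<subseteq> closure J" by (rule closure_subset)
  have cont_l: "continuous_on UNIV (\<lambda>S. A o\<^sub>L S)" for A :: "'a \<Rightarrow>\<^sub>L 'a"
    by (intro continuous_intros)
  have cont_r: "continuous_on UNIV (\<lambda>S. S o\<^sub>L A)" for A :: "'a \<Rightarrow>\<^sub>L 'a"
    by (intro continuous_intros)
  have cont_p: "continuous_on UNIV (\<lambda>S. S + R)" for R :: "'a \<Rightarrow>\<^sub>L 'a"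
    by (intro continuous_intros)
  have cont_p2: "continuous_on UNIV (\<lambda>R. S + R)" for S :: "'a \<Rightarrow>\<^sub>L 'a"
    by (intro continuous_intros)
  show ?thesis unfolding bimodule_def op_csubspace_def
  proof (intro conjI ballI allI impI)
    show "closure J \<subseteq> bop"
      using sp closed_bop closure_minimal unfolding op_csubspace_def by blast
    show "0 \<in> closure J" using sp sub unfolding op_csubspace_def by blast
  next
    fix S R assume S: "S \<in> closure J" and R: "R \<in> closure J"
    have add1: "S' + R' \<in> closure J" if S': "S' \<in> closure J" and R': "R' \<in> J" for S' R'
    proof (rule closure_stable[OF cont_p[of R'] _ S'])
      fix S'' assume "S'' \<in> J"
      then show "S'' + R' \<in> closure J" using R' sp sub unfolding op_csubspace_def by blast
    qed
    show "S + R \<in> closure J"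
    proof (rule closure_stable[OF cont_p2[of S] _ R])
      fix R'' assume "R'' \<in> J"
      then show "S + R'' \<in> closure J" using add1 S by blast
    qed
  next
    fix c S R assume S: "S \<in> closure J" and R: "\<forall>x. blinfun_apply R x = cscale c (blinfun_apply S x)"
    have "R = cmul c o\<^sub>L S" using R by (auto intro!: blinfun_eqI)
    moreover have "cmul c o\<^sub>L S \<in> closure J"
    proof (rule closure_stable[OF cont_l _ S])
      fix S' assume "S' \<in> J"
      then show "cmul c o\<^sub>L S' \<in> closure J" using op_csubspace_scale[OF sp, of S' "cmul c o\<^sub>L S'" c] sub by auto
    qed
    ultimately show "R \<in> closure J" by simp
  next
    fix A S assume A: "A \<in> nest_alg \<E>" and S: "S \<in> closure J"
    show "A o\<^sub>L S \<in> closure J"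
      using closure_stable[OF cont_l _ S] J A sub unfolding bimodule_def by blast
    show "S o\<^sub>L A \<in> closure J"
      using closure_stable[OF cont_r _ S] J A sub unfolding bimodule_def by blast
  qed
qed

definition gens :: "'a::complex_banach set set \<Rightarrow> ('a set \<Rightarrow> 'a set) \<Rightarrow> ('a \<Rightarrow>\<^sub>L 'a) set" where
  "gens \<E> \<Psi> = \<Union>{{rank_one f x |f x. f \<in> annih (lower \<E> N) \<and> x \<in> L}
        |L N. L \<in> \<E> \<and> N \<in> \<E> \<and> lower \<E> L \<subset> \<Psi> N}"

lemma M0_gens: "M0 \<E> \<Psi> = closure (op_cspan (gens \<E> \<Psi>))"
  unfolding M0_def gens_def ..

lemma gens_bop: "gens \<E> \<Psi> \<subseteq> bop"
  unfolding gens_def annih_def using rank_one_bop by blast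

lemma M0_bimodule:
  assumes nest: "nest \<E>"
  shows "bimodule \<E> (M0 \<E> \<Psi>)"
  unfolding M0_gens
proof (intro bimodule_closure bimodule_op_cspan[OF gens_bop])
  fix A S assume A: "A \<in> nest_alg \<E>" and S: "S \<in> gens \<E> \<Psi>"
  have Ab: "A \<in> bop" using A nest_alg_bop by blast
  obtain L N f x where LN: "L \<in> \<E>" "N \<in> \<E>" "lower \<E> L \<subset> \<Psi> N" and f: "f \<in> annih (lower \<E> N)"
    and x: "x \<in> L" and Sd: "S = rank_one f x"
    using S unfolding gens_def by blast
  have "A o\<^sub>L S = rank_one f (blinfun_apply A x)" using compose_rank_one_left[OF Ab] Sd by simp
  moreover have "blinfun_apply A x \<in> L" using nest_alg_inv[OF A LN(1)] x by blast
  ultimately have 1: "A o\<^sub>L S \<in> gens \<E> \<Psi>" unfolding gens_def using LN f by blast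
  have "S o\<^sub>L A = rank_one (f o\<^sub>L A) x" using compose_rank_one_right Sd by simp
  moreover have "f o\<^sub>L A \<in> annih (lower \<E> N)"
  proof -
    have "blinfun_apply A ` lower \<E> N \<subseteq> lower \<E> N" using nest_alg_inv[OF A lower_in[OF nest]] .
    then show ?thesis using f Ab dual_compose unfolding annih_def by auto
  qed
  ultimately have 2: "S o\<^sub>L A \<in> gens \<E> \<Psi>" unfolding gens_def using LN x by blast
  show "A o\<^sub>L S \<in> op_cspan (gens \<E> \<Psi>) \<and> S o\<^sub>L A \<in> op_cspan (gens \<E> \<Psi>)"
    using 1 2 op_cspan_props(2)[OF gens_bop] by blast
qed



definition graphs_ok :: "('a::real_normed_vector \<times> real) set \<Rightarrow> bool" where
  "graphs_ok G \<longleftrightarrow> subspace G \<and> (\<forall>e. (0, e) \<in> G \<longrightarrow> e = 0) \<and> (\<forall>x a. (x, a) \<in> G \<longrightarrow> a \<le> norm x)"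

lemma graphs_ok_fun:
  assumes "graphs_ok G" "(x, a) \<in> G" "(x, b) \<in> G" shows "a = b"
proof -
  have "(x, a) - (x, b) \<in> G" using assms subspace_diff unfolding graphs_ok_def by blast
  then show ?thesis using assms(1) unfolding graphs_ok_def by auto
qed

lemma hb_extend_step:
  fixes M :: "('a::real_normed_vector \<times> real) set"
  assumes ok: "graphs_ok M" and z: "z \<notin> fst ` M"
  shows "\<exists>G. graphs_ok G \<and> M \<subset> G"
proof -
  have sM: "subspace M" using ok unfolding graphs_ok_def by blast
  have dom: "\<And>x a. (x, a) \<in> M \<Longrightarrow> a \<le> norm x" using ok unfolding graphs_ok_def by blast
  have M0: "(0, 0) \<in> M" using sM subspace_0 by (metis zero_prod_def)
  have key: "b - norm (y - z) \<le> norm (x + z) - a" if "(x, a) \<in> M" "(y, b) \<in> M" for x a y b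
  proof -
    have "(x + y, a + b) \<in> M" using subspace_add[OF sM that] by simp
    then have "a + b \<le> norm (x + y)" by (rule dom)
    also have "x + y = (x + z) + (y - z)" by simp
    also have "norm \<dots> \<le> norm (x + z) + norm (y - z)" by (rule norm_triangle_ineq)
    finally show ?thesis by simp
  qed
  define B where "B = {b - norm (y - z) |y b. (y, b) \<in> M}"
  define c where "c = Sup B"
  have Bne: "B \<noteq> {}" using M0 unfolding B_def by blast
  have Bbdd: "bdd_above B" unfolding B_def bdd_above_def using key[OF M0] by fastforce
  have c1: "b - norm (y - z) \<le> c" if "(y, b) \<in> M" for y b
    unfolding c_def using Bbdd that by (auto intro!: cSup_upper simp: B_def)
  have c2: "c \<le> norm (x + z) - a" if "(x, a) \<in> M" for x a
    unfolding c_def using Bne key[OF that] by (auto intro!: cSup_least simp: B_def)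
  define G where "G = span (insert (z, c) M)"
  have Gmem: "(w, e) \<in> G \<longleftrightarrow> (\<exists>t. (w - t *\<^sub>R z, e - t * c) \<in> M)" for w e
  proof -
    have spanM: "span M = M" using sM by (simp add: span_eq_iff)
    show ?thesis unfolding G_def span_breakdown_eq spanM by simp
  qed
  have okG: "graphs_ok G" unfolding graphs_ok_def
  proof (intro conjI allI impI)
    show "subspace G" unfolding G_def by simp
  next
    fix e assume "(0, e) \<in> G"
    then obtain t where t: "(- t *\<^sub>R z, e - t * c) \<in> M" using Gmem by auto
    have t0: "t = 0"
    proof (rule ccontr)
      assume "t \<noteq> 0"
      have "(- (1/t)) *\<^sub>R (- t *\<^sub>R z, e - t * c) \<in> M" using subspace_scale[OF sM t] .
      then have "(z, - (1/t) * (e - t * c)) \<in> M" using \<open>t \<noteq> 0\<close> by simp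
      then show False using z by force
    qed
    then have "(0, e) \<in> M" using t by simp
    then show "e = 0" using ok unfolding graphs_ok_def by blast
  next
    fix w e assume "(w, e) \<in> G"
    then obtain t where t: "(w - t *\<^sub>R z, e - t * c) \<in> M" using Gmem by auto
    define x a where "x = w - t *\<^sub>R z" and "a = e - t * c"
    have xa: "(x, a) \<in> M" using t x_def a_def by simp
    have we: "w = x + t *\<^sub>R z" "e = a + t * c" using x_def a_def by auto
    consider "t = 0" | "t > 0" | "t < 0" by linarith
    then show "e \<le> norm w"
    proof cases
      case 1 then show ?thesis using dom[OF xa] we by simp
    next
      case 2
      have "(1/t) *\<^sub>R (x, a) \<in> M" using subspace_scale[OF sM xa] .
      then have "((1/t) *\<^sub>R x, a / t) \<in> M" by simp
      from c2[OF this] have "c \<le> norm ((1/t) *\<^sub>R x + z) - a / t" .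
      also have "(1/t) *\<^sub>R x + z = (1/t) *\<^sub>R (x + t *\<^sub>R z)" using 2 by (simp add: algebra_simps)
      also have "norm \<dots> = norm (x + t *\<^sub>R z) / t" using 2 by simp
      finally have "t * c \<le> norm (x + t *\<^sub>R z) - a" using 2 by (simp add: field_simps)
      then show ?thesis using we by simp
    next
      case 3
      define s where "s = - t"
      have s: "s > 0" using 3 s_def by simp
      have "(1/s) *\<^sub>R (x, a) \<in> M" using subspace_scale[OF sM xa] .
      then have "((1/s) *\<^sub>R x, a / s) \<in> M" by simp
      from c1[OF this] have "a / s - norm ((1/s) *\<^sub>R x - z) \<le> c" .
      also have "(1/s) *\<^sub>R x - z = (1/s) *\<^sub>R (x - s *\<^sub>R z)" using s by (simp add: algebra_simps)
      also have "norm \<dots> = norm (x - s *\<^sub>R z) / s" using s by simp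
      finally have "a - norm (x - s *\<^sub>R z) \<le> s * c" using s by (simp add: field_simps)
      then show ?thesis using we s_def by (simp add: algebra_simps)
    qed
  qed
  have "M \<subseteq> G" unfolding G_def by (meson span_superset subset_insertI subset_trans)
  moreover have "(z, c) \<in> G" unfolding G_def by (rule span_base) simp
  moreover have "(z, c) \<notin> M" using z by force
  ultimately show ?thesis using okG by blast
qed

lemma hahn_banach_real:
  fixes G0 :: "('a::real_normed_vector \<times> real) set"
  assumes ok0: "graphs_ok G0"
  shows "\<exists>\<phi>. linear \<phi> \<and> (\<forall>x. \<phi> x \<le> norm x) \<and> (\<forall>x a. (x, a) \<in> G0 \<longrightarrow> \<phi> x = a)"
proof -
  define A where "A = {G. graphs_ok G \<and> G0 \<subseteq> G}"
  have chain_ub: "\<exists>U\<in>A. \<forall>X\<in>C. X \<subseteq> U" if C: "C \<in> chains A" for C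
  proof (cases "C = {}")
    case True then show ?thesis using ok0 unfolding A_def by blast
  next
    case False
    have CA: "C \<subseteq> A" and ch: "\<And>X Y. X \<in> C \<Longrightarrow> Y \<in> C \<Longrightarrow> X \<subseteq> Y \<or> Y \<subseteq> X"
      using C unfolding chains_def chain_subset_def by blast+
    have big: "\<exists>X\<in>C. p \<in> X \<and> q \<in> X" if "p \<in> \<Union>C" "q \<in> \<Union>C" for p q
      using that ch by blast
    have "graphs_ok (\<Union>C)" unfolding graphs_ok_def
    proof (intro conjI allI impI)
      show "subspace (\<Union>C)" unfolding subspace_def
      proof (intro conjI ballI allI)
        obtain X where "X \<in> C" using False by blast
        moreover then have "subspace X" using CA unfolding A_def graphs_ok_def by blast
        ultimately show "0 \<in> \<Union>C" using subspace_0 by blast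
      next
        fix p q assume "p \<in> \<Union>C" "q \<in> \<Union>C"
        then obtain X where "X \<in> C" "p \<in> X" "q \<in> X" using big by blast
        moreover then have "subspace X" using CA unfolding A_def graphs_ok_def by blast
        ultimately show "p + q \<in> \<Union>C" using subspace_add by blast
      next
        fix r p assume "p \<in> \<Union>C"
        then obtain X where "X \<in> C" "p \<in> X" by blast
        moreover then have "subspace X" using CA unfolding A_def graphs_ok_def by blast
        ultimately show "r *\<^sub>R p \<in> \<Union>C" using subspace_scale by blast
      qed
    next
      fix e assume "(0, e) \<in> \<Union>C"
      then show "e = 0" using CA unfolding A_def graphs_ok_def by blast
    next
      fix x a assume "(x, a) \<in> \<Union>C"
      then show "a \<le> norm x" using CA unfolding A_def graphs_ok_def by blast
    qed
    moreover have "G0 \<subseteq> \<Union>C" using False CA unfolding A_def by blast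
    ultimately show ?thesis unfolding A_def by blast
  qed
  have "\<exists>M\<in>A. \<forall>X\<in>A. M \<subseteq> X \<longrightarrow> X = M"
    by (rule Zorn_Lemma2) (use chain_ub in blast)
  then obtain M where M: "M \<in> A" and max0: "\<forall>X\<in>A. M \<subseteq> X \<longrightarrow> X = M" by blast
  have max: "X = M" if "X \<in> A" "M \<subseteq> X" for X using max0 that by blast
  have okM: "graphs_ok M" and G0M: "G0 \<subseteq> M" using M unfolding A_def by auto
  have full: "z \<in> fst ` M" for z
  proof (rule ccontr)
    assume "z \<notin> fst ` M"
    then obtain G where "graphs_ok G" "M \<subset> G" using hb_extend_step[OF okM] by blast
    moreover then have "G \<in> A" using G0M unfolding A_def by blast
    ultimately show False using max by blast
  qed
  define \<phi> where "\<phi> x = (SOME a. (x, a) \<in> M)" for x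
  have phiM: "(x, \<phi> x) \<in> M" for x
  proof -
    obtain a where "(x, a) \<in> M" using full[of x] by force
    then show ?thesis unfolding \<phi>_def by (rule someI)
  qed
  have sM: "subspace M" using okM unfolding graphs_ok_def by blast
  have phi_eq: "(x, a) \<in> M \<Longrightarrow> \<phi> x = a" for x a using graphs_ok_fun[OF okM phiM] by blast
  have "linear \<phi>"
  proof (rule linearI)
    fix x y show "\<phi> (x + y) = \<phi> x + \<phi> y"
      using subspace_add[OF sM phiM[of x] phiM[of y]] phi_eq by simp
  next
    fix r x show "\<phi> (r *\<^sub>R x) = r *\<^sub>R \<phi> x"
      using subspace_scale[OF sM phiM[of x], of r] phi_eq by simp
  qed
  moreover have "\<phi> x \<le> norm x" for x using phiM[of x] okM unfolding graphs_ok_def by blast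
  moreover have "(x, a) \<in> G0 \<Longrightarrow> \<phi> x = a" for x a using G0M phi_eq by blast
  ultimately show ?thesis by (intro exI[of _ \<phi>]) simp
qed



lemma cscale_ii: "cscale \<i> (cscale \<i> x) = - x"
  by (simp add: cscale_cscale cv.scale_minus_left)

lemma cscale_decomp: "cscale c x = Re c *\<^sub>R x + Im c *\<^sub>R cscale \<i> x"
proof -
  have ce: "c = complex_of_real (Re c) + complex_of_real (Im c) * \<i>" by (simp add: complex_eq_iff)
  have "cscale c x = cscale (complex_of_real (Re c) + complex_of_real (Im c) * \<i>) x"
    by (rule arg_cong[where f="\<lambda>c. cscale c x", OF ce])
  also have "\<dots> = Re c *\<^sub>R x + Im c *\<^sub>R cscale \<i> x"
    by (simp add: cscale_add_left scaleR_cscale cscale_cscale)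
  finally show ?thesis .
qed

lemma separation:
  fixes S :: "'a::complex_banach set"
  assumes sS: "cv.subspace S" and cS: "closed S" and z: "z \<notin> S"
  shows "\<exists>g\<in>dual. (\<forall>y\<in>S. blinfun_apply g y = 0) \<and> blinfun_apply g z \<noteq> 0"
proof -
  have S0: "0 \<in> S" using sS cv.subspace_0 by blast
  have Sadd: "x + y \<in> S" if "x \<in> S" "y \<in> S" for x y using sS that cv.subspace_add by blast
  have Sscale: "cscale c x \<in> S" if "x \<in> S" for c x using sS that cv.subspace_scale by blast
  have SscaleR: "r *\<^sub>R x \<in> S" if "x \<in> S" for r x using Sscale[OF that] by (simp add: scaleR_cscale)
  define d where "d = infdist z S"
  have d: "d > 0"
  proof -
    have "d \<noteq> 0" using in_closed_iff_infdist_zero[OF cS] S0 z unfolding d_def by blast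
    then show ?thesis using infdist_nonneg[of z S] unfolding d_def by linarith
  qed
  define G0 where "G0 = {(s + t *\<^sub>R z, t * d) |s t. s \<in> S}"
  have ok: "graphs_ok G0" unfolding graphs_ok_def
  proof (intro conjI allI impI)
    show "subspace G0" unfolding subspace_def
    proof (intro conjI ballI allI)
      show "0 \<in> G0" unfolding G0_def
        by (rule CollectI, rule exI[of _ 0], rule exI[of _ 0]) (simp add: S0 zero_prod_def)
    next
      fix p q assume "p \<in> G0" "q \<in> G0"
      then obtain s t s' t' where "p = (s + t *\<^sub>R z, t * d)" "q = (s' + t' *\<^sub>R z, t' * d)" "s \<in> S" "s' \<in> S"
        unfolding G0_def by blast
      then have e: "p + q = ((s + s') + (t + t') *\<^sub>R z, (t + t') * d)" and ss: "s + s' \<in> S"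
        using Sadd by (auto simp: algebra_simps)
      show "p + q \<in> G0" unfolding G0_def e
        by (rule CollectI, rule exI[of _ "s + s'"], rule exI[of _ "t + t'"]) (simp add: ss)
    next
      fix r p assume "p \<in> G0"
      then obtain s t where "p = (s + t *\<^sub>R z, t * d)" "s \<in> S" unfolding G0_def by blast
      then have e: "r *\<^sub>R p = (r *\<^sub>R s + (r * t) *\<^sub>R z, (r * t) * d)" and ss: "r *\<^sub>R s \<in> S"
        using SscaleR by (auto simp: algebra_simps)
      show "r *\<^sub>R p \<in> G0" unfolding G0_def e
        by (rule CollectI, rule exI[of _ "r *\<^sub>R s"], rule exI[of _ "r * t"]) (simp add: ss)
    qed
  next
    fix e assume "(0, e) \<in> G0"
    then obtain s t where st: "0 = s + t *\<^sub>R z" "e = t * d" "s \<in> S" unfolding G0_def by blast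
    have "t = 0"
    proof (rule ccontr)
      assume t: "t \<noteq> 0"
      have "z = (- (1/t)) *\<^sub>R s"
      proof -
        have "t *\<^sub>R z = - s" using st(1) by (simp add: eq_neg_iff_add_eq_0 add.commute)
        then have "(1/t) *\<^sub>R (t *\<^sub>R z) = (1/t) *\<^sub>R (- s)" by simp
        then show ?thesis using t by simp
      qed
      then show False using SscaleR[OF st(3), of "- (1/t)"] z by simp
    qed
    then show "e = 0" using st by simp
  next
    fix x a assume "(x, a) \<in> G0"
    then obtain s t where st: "x = s + t *\<^sub>R z" "a = t * d" "s \<in> S" unfolding G0_def by blast
    show "a \<le> norm x"
    proof (cases "t > 0")
      case False
      then have "a \<le> 0" using st d by (simp add: mult_nonpos_nonneg)
      then show ?thesis by (meson norm_ge_zero order_trans)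
    next
      case True
      have "d \<le> dist z ((- (1/t)) *\<^sub>R s)" unfolding d_def by (rule infdist_le) (rule SscaleR[OF st(3)])
      also have "dist z ((- (1/t)) *\<^sub>R s) = norm ((1/t) *\<^sub>R x)"
        using True st(1) by (simp add: dist_norm algebra_simps)
      also have "\<dots> = norm x / t" using True by simp
      finally show ?thesis using True st(2) by (simp add: field_simps)
    qed
  qed
  obtain \<phi> where lin: "linear \<phi>" and bnd: "\<And>x. \<phi> x \<le> norm x" and ext: "\<And>x a. (x, a) \<in> G0 \<Longrightarrow> \<phi> x = a"
    using hahn_banach_real[OF ok] by blast
  have phiS: "\<phi> s = 0" if "s \<in> S" for s
  proof -
    have "(s, 0) \<in> G0" unfolding G0_def
      by (rule CollectI, rule exI[of _ s], rule exI[of _ 0]) (simp add: that)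
    then show ?thesis by (rule ext)
  qed
  have phiz: "\<phi> z = d"
  proof -
    have "(z, d) \<in> G0" unfolding G0_def
      by (rule CollectI, rule exI[of _ 0], rule exI[of _ 1]) (simp add: S0)
    then show ?thesis by (rule ext)
  qed
  have abs_phi: "\<bar>\<phi> x\<bar> \<le> norm x" for x
    using bnd[of x] bnd[of "- x"] linear_neg[OF lin, of x] by simp
  define g where "g x = Complex (\<phi> x) (- \<phi> (cscale \<i> x))" for x
  have ci_add: "cscale \<i> (x + y) = cscale \<i> x + cscale \<i> y" for x y :: 'a by (rule cscale_add_right)
  have ci_scaleR: "cscale \<i> (r *\<^sub>R x) = r *\<^sub>R cscale \<i> x" for r and x :: 'a
    by (simp add: scaleR_cscale cscale_cscale mult.commute)
  have blg: "bounded_linear g"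
  proof (rule bounded_linear_intro[where K=2])
    fix x y show "g (x + y) = g x + g y"
      unfolding g_def ci_add linear_add[OF lin] by (simp add: complex_eq_iff)
  next
    fix r x show "g (r *\<^sub>R x) = r *\<^sub>R g x"
      unfolding g_def ci_scaleR linear_scale[OF lin] by (simp add: complex_eq_iff)
  next
    fix x
    have "norm (g x) \<le> \<bar>\<phi> x\<bar> + \<bar>\<phi> (cscale \<i> x)\<bar>"
      unfolding g_def using cmod_le[of "Complex (\<phi> x) (- \<phi> (cscale \<i> x))"] by simp
    also have "\<dots> \<le> norm x + norm (cscale \<i> x)" by (intro add_mono abs_phi)
    also have "norm (cscale \<i> x) = norm x" by (simp add: norm_cscale)
    finally show "norm (g x) \<le> norm x * 2" by simp
  qed
  have gc: "g (cscale c x) = c * g x" for c x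
  proof -
    have a: "\<phi> (cscale c x) = Re c * \<phi> x + Im c * \<phi> (cscale \<i> x)"
      unfolding cscale_decomp[of c x] linear_add[OF lin] linear_scale[OF lin] by simp
    have b: "\<phi> (cscale \<i> (cscale c x)) = Re c * \<phi> (cscale \<i> x) - Im c * \<phi> x"
      unfolding cscale_decomp[of c x] ci_add ci_scaleR cscale_ii linear_add[OF lin] linear_scale[OF lin]
        linear_neg[OF lin] by simp
    show ?thesis unfolding g_def a b by (simp add: complex_eq_iff algebra_simps)
  qed
  define gb where "gb = Blinfun g"
  have gb_apply: "blinfun_apply gb = g" unfolding gb_def using bounded_linear_Blinfun_apply[OF blg] .
  have "gb \<in> dual" unfolding dual_def by (simp add: gb_apply gc)
  moreover have "\<forall>y\<in>S. blinfun_apply gb y = 0"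
    unfolding gb_apply g_def using phiS Sscale by (simp add: complex_eq_iff)
  moreover have "blinfun_apply gb z \<noteq> 0" unfolding gb_apply g_def using phiz d by (simp add: complex_eq_iff)
  ultimately show ?thesis by blast
qed

lemma M0_min:
  assumes nest: "nest \<E>" and J: "bimodule \<E> J" and cJ: "closed J" and Phi: "\<forall>N\<in>\<E>. Phi_e \<E> J N = \<Psi> N"
  shows "M0 \<E> \<Psi> \<subseteq> J"
proof -
  have sp: "op_csubspace J" using J unfolding bimodule_def by blast
  have "gens \<E> \<Psi> \<subseteq> J"
  proof
    fix S assume "S \<in> gens \<E> \<Psi>"
    then obtain L N f x where LN: "L \<in> \<E>" "N \<in> \<E>" "lower \<E> L \<subset> \<Psi> N" and f: "f \<in> annih (lower \<E> N)"
      and x: "x \<in> L" and Sd: "S = rank_one f x"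
      unfolding gens_def by blast
    have lL: "lower \<E> L \<in> \<E>" using lower_in[OF nest] .
    obtain T y where T: "T \<in> J" and y: "y \<in> N" and Ty: "blinfun_apply T y \<notin> lower \<E> L"
    proof -
      have "\<not> (\<forall>T\<in>J. fin_quot (blinfun_apply T ` N) (lower \<E> L))"
      proof
        assume "\<forall>T\<in>J. fin_quot (blinfun_apply T ` N) (lower \<E> L)"
        then have "lower \<E> L \<in> {L' \<in> \<E>. \<forall>T\<in>J. fin_quot (blinfun_apply T ` N) L'}" using lL by blast
        then have "Phi_e \<E> J N \<subseteq> lower \<E> L" unfolding Phi_e_def by (rule Inter_lower)
        moreover have "Phi_e \<E> J N = \<Psi> N" using Phi LN(2) by simp
        ultimately have "\<Psi> N \<subseteq> lower \<E> L" by simp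
        then show False using LN(3) by (simp add: less_le_not_le)
      qed
      then obtain T where "T \<in> J" "\<not> fin_quot (blinfun_apply T ` N) (lower \<E> L)" by blast
      moreover then have "\<not> blinfun_apply T ` N \<subseteq> lower \<E> L" using fin_quot_sub by blast
      ultimately show ?thesis using that by blast
    qed
    obtain g where g: "g \<in> dual" "\<forall>w\<in>lower \<E> L. blinfun_apply g w = 0" and gT: "blinfun_apply g (blinfun_apply T y) \<noteq> 0"
      using separation[OF nest_sub[OF nest lL] Ty] by blast
    have A1: "rank_one g x \<in> nest_alg \<E>"
      using rank_one_nest_alg[OF nest LN(1) _ x] g unfolding annih_def by blast
    have A2: "rank_one f y \<in> nest_alg \<E>"
      using rank_one_nest_alg[OF nest LN(2) f y] .
    have "T o\<^sub>L rank_one f y \<in> J" using J A2 T unfolding bimodule_def by blast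
    then have P: "rank_one g x o\<^sub>L (T o\<^sub>L rank_one f y) \<in> J" using J A1 unfolding bimodule_def by blast
    have Tb: "T \<in> bop" using sp T unfolding op_csubspace_def by blast
    define \<kappa> where "\<kappa> = blinfun_apply g (blinfun_apply T y)"
    have Papp: "blinfun_apply (rank_one g x o\<^sub>L (T o\<^sub>L rank_one f y)) w = cscale \<kappa> (cscale (blinfun_apply f w) x)" for w
      unfolding \<kappa>_def using g(1) by (simp add: bop_lin[OF Tb] dual_lin cscale_cscale mult.commute)
    have R_eq: "blinfun_apply (rank_one f x) w
        = cscale (1/\<kappa>) (blinfun_apply (rank_one g x o\<^sub>L (T o\<^sub>L rank_one f y)) w)" for w
      unfolding Papp using gT unfolding \<kappa>_def by (simp add: cscale_cscale)
    have "rank_one f x \<in> J" by (rule op_csubspace_scale[OF sp P R_eq])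
    then show "S \<in> J" unfolding Sd .
  qed
  then have "op_cspan (gens \<E> \<Psi>) \<subseteq> J" using op_cspan_sub[OF sp] by blast
  then show ?thesis unfolding M0_gens using cJ closure_minimal by blast
qed

theorem mainTheorem15:
  fixes \<E> :: "'a::complex_banach set set" and \<Psi> :: "'a set \<Rightarrow> 'a set"
  assumes "nest \<E>" and "ess_support_fn \<E> \<Psi>"
  shows "(bimodule \<E> (Me \<E> \<Psi>)
          \<and> (\<forall>J. bimodule \<E> J \<and> (\<forall>N\<in>\<E>. Phi_e \<E> J N = \<Psi> N) \<longrightarrow> J \<subseteq> Me \<E> \<Psi>))
       \<and> (bimodule \<E> (M0 \<E> \<Psi>)
          \<and> (\<forall>J. bimodule \<E> J \<and> closed J \<and> (\<forall>N\<in>\<E>. Phi_e \<E> J N = \<Psi> N) \<longrightarrow> M0 \<E> \<Psi> \<subseteq> J))"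
proof (intro conjI allI impI)
  show "bimodule \<E> (Me \<E> \<Psi>)" by (rule Me_bimodule[OF assms(1)])
  show "bimodule \<E> (M0 \<E> \<Psi>)" by (rule M0_bimodule[OF assms(1)])
next
  fix J assume "bimodule \<E> J \<and> (\<forall>N\<in>\<E>. Phi_e \<E> J N = \<Psi> N)"
  then show "J \<subseteq> Me \<E> \<Psi>" using Me_max[OF assms(1)] by blast
next
  fix J assume "bimodule \<E> J \<and> closed J \<and> (\<forall>N\<in>\<E>. Phi_e \<E> J N = \<Psi> N)"
  then show "M0 \<E> \<Psi> \<subseteq> J" using M0_min[OF assms(1)] by blast
qed


end
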